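(* Let $M=(r,q,u)$ be a floor-randomized mechanism satisfying DD. Then there exists a floor-randomized mechanism $\tilde M=(\tilde r,\tilde q,u)$ (with the same $u$) satisfying DD and left continuity such that, for all $\theta\in\Theta$, $\tilde q(\theta)\tilde r(\theta)\ge q(\theta)r(\theta)$, $\mathrm{CS}(\theta,\tilde M)\ge\mathrm{CS}(\theta,M)$ and $\mathrm{RS}_\alpha(\theta,\tilde M)\ge\mathrm{RS}_\alpha(\theta,M)$, with equality in all three for almost every $\theta$; moreover all three inequalities are strict at every $\theta$ at which $\theta\mapsto q(\theta)r(\theta)$ is not left continuous.
   Context: Setting. Let $\Theta=[\underline\theta,\overline\theta]$ with $0<\underline\theta<\overline\theta$. Let $c>0$ and let $P:\mathbb R_+\to\mathbb R_+$ be continuous and strictly decreasing with $P(\overline q)=0$ for some $\overline q>0$. Put $V(q)=\int_0^q P(z)\,dz$ and $\mathrm{TS}(\theta,q)=V(q)-c-\theta q$ for $q>0$, $\mathrm{TS}(\theta,0)=0$. Assume (A2): $\mathrm{TS}(\overline\theta,P^{-1}(\overline\theta))>0$. A mechanism is a triple $M=(r,q,u)$ of functions $r:\Theta\to[0,1]$, $q:\Theta\to[0,\overline q]$, $u:\Theta\to\mathbb R$ with $q(\theta)=0$ if and only if $r(\theta)=0$. It is IC if $u(\theta)\ge u(\theta')+(\theta'-\theta)q(\theta')r(\theta')$ for all $\theta,\theta'\in\Theta$, and IR if $u(\theta)\ge 0$ for all $\theta$. (Known fact: $M$ is IC iff $\theta\mapsto q(\theta)r(\theta)$ is nonincreasing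 and $u(\theta)=u(\overline\theta)+\int_\theta^{\overline\theta}q(z)r(z)\,dz$ for all $\theta$; an IC mechanism is IR iff $u(\overline\theta)\ge0$.) Fix $\alpha\in[0,1)$. The consumer surplus is $\mathrm{CS}(\theta,M)=r(\theta)\,\mathrm{TS}(\theta,q(\theta))-u(\theta)$ and the regulator's surplus at $\theta$ is $\mathrm{RS}_\alpha(\theta,M)=r(\theta)\,\mathrm{TS}(\theta,q(\theta))-(1-\alpha)u(\theta)$. The quantity floor $\hat q$ is the unique $q>0$ with $V(q)-qP(q)=c$. A mechanism $(r,q,u)$ is floor-randomized if it is IC, IR, $u(\overline\theta)=0$, and $\Theta$ can be partitioned into three pairwise disjoint (possibly empty) intervals $\Theta_1,\Theta_{01},\Theta_0$, with every element of $\Theta_0$ larger than every element of $\Theta_{01}$ and every element of $\Theta_{01}$ larger than every element of $\Theta_1$, such that: $q(\theta)\ge\hat q$ and $r(\theta)=1$ for $\theta\in\Theta_1$; $q(\theta)=\hat q$ and $r(\theta)\in(0,1)$ for $\theta\in\Theta_{01}$; $q(\theta)=r(\theta)=0$ for $\theta\in\Theta_0$. The efficient quantity is $q_e(\theta)=P^{-1}(\theta)$. A mechanism satisfies downward distortion (DD) if $q(\theta)\le q_e(\theta)$ for all $\theta$, with equality at $\theta=\underline\theta$. A mechanism is left continuous if $\theta\mapsto q(\theta)r(\theta)$ is left continuous at every $\theta\in(\underline\theta,\overline\theta]$. *)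

theory Defs
  imports "HOL-Analysis.Analysis"
begin

definition V :: "(real \<Rightarrow> real) \<Rightarrow> real \<Rightarrow> real" where
  "V P q = integral {0..q} P"

definition TS :: "(real \<Rightarrow> real) \<Rightarrow> real \<Rightarrow> real \<Rightarrow> real \<Rightarrow> real" where
  "TS P c \<theta> q = (if q > 0 then V P q - c - \<theta> * q else 0)"

definition qe :: "(real \<Rightarrow> real) \<Rightarrow> real \<Rightarrow> real \<Rightarrow> real" where
  "qe P qbar \<theta> = (THE q. 0 \<le> q \<and> q \<le> qbar \<and> P q = \<theta>)"

definition qhat :: "(real \<Rightarrow> real) \<Rightarrow> real \<Rightarrow> real \<Rightarrow> real" where
  "qhat P qbar c = (THE q. 0 < q \<and> q \<le> qbar \<and> V P q - q * P q = c)"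

definition mechanism ::
  "real \<Rightarrow> real \<Rightarrow> real \<Rightarrow> (real \<Rightarrow> real) \<Rightarrow> (real \<Rightarrow> real) \<Rightarrow> (real \<Rightarrow> real) \<Rightarrow> bool" where
  "mechanism \<theta>l \<theta>h qbar r q u \<longleftrightarrow>
     (\<forall>\<theta>\<in>{\<theta>l..\<theta>h}. 0 \<le> r \<theta> \<and> r \<theta> \<le> 1 \<and> 0 \<le> q \<theta> \<and> q \<theta> \<le> qbar
                      \<and> (q \<theta> = 0 \<longleftrightarrow> r \<theta> = 0))"

definition IC :: "real \<Rightarrow> real \<Rightarrow> (real \<Rightarrow> real) \<Rightarrow> (real \<Rightarrow> real) \<Rightarrow> (real \<Rightarrow> real) \<Rightarrow> bool" where
  "IC \<theta>l \<theta>h r q u \<longleftrightarrow>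
     (\<forall>\<theta>\<in>{\<theta>l..\<theta>h}. \<forall>\<theta>'\<in>{\<theta>l..\<theta>h}. u \<theta> \<ge> u \<theta>' + (\<theta>' - \<theta>) * q \<theta>' * r \<theta>')"

definition IR :: "real \<Rightarrow> real \<Rightarrow> (real \<Rightarrow> real) \<Rightarrow> bool" where
  "IR \<theta>l \<theta>h u \<longleftrightarrow> (\<forall>\<theta>\<in>{\<theta>l..\<theta>h}. u \<theta> \<ge> 0)"

definition floor_randomized ::
  "(real \<Rightarrow> real) \<Rightarrow> real \<Rightarrow> real \<Rightarrow> real \<Rightarrow> real \<Rightarrow>
   (real \<Rightarrow> real) \<Rightarrow> (real \<Rightarrow> real) \<Rightarrow> (real \<Rightarrow> real) \<Rightarrow> bool" where
  "floor_randomized P qbar c \<theta>l \<theta>h r q u \<longleftrightarrow>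
     mechanism \<theta>l \<theta>h qbar r q u \<and> IC \<theta>l \<theta>h r q u \<and> IR \<theta>l \<theta>h u \<and> u \<theta>h = 0 \<and>
     (\<exists>T1 T01 T0. is_interval T1 \<and> is_interval T01 \<and> is_interval T0 \<and>
        T1 \<union> T01 \<union> T0 = {\<theta>l..\<theta>h} \<and>
        T1 \<inter> T01 = {} \<and> T1 \<inter> T0 = {} \<and> T01 \<inter> T0 = {} \<and>
        (\<forall>x\<in>T0. \<forall>y\<in>T01. y < x) \<and> (\<forall>x\<in>T01. \<forall>y\<in>T1. y < x) \<and>
        (\<forall>\<theta>\<in>T1. q \<theta> \<ge> qhat P qbar c \<and> r \<theta> = 1) \<and>
        (\<forall>\<theta>\<in>T01. q \<theta> = qhat P qbar c \<and> 0 < r \<theta> \<and> r \<theta> < 1) \<and>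
        (\<forall>\<theta>\<in>T0. q \<theta> = 0 \<and> r \<theta> = 0))"

definition DD :: "(real \<Rightarrow> real) \<Rightarrow> real \<Rightarrow> real \<Rightarrow> real \<Rightarrow> (real \<Rightarrow> real) \<Rightarrow> bool" where
  "DD P qbar \<theta>l \<theta>h q \<longleftrightarrow>
     (\<forall>\<theta>\<in>{\<theta>l..\<theta>h}. q \<theta> \<le> qe P qbar \<theta>) \<and> q \<theta>l = qe P qbar \<theta>l"

definition left_continuous_mech ::
  "real \<Rightarrow> real \<Rightarrow> (real \<Rightarrow> real) \<Rightarrow> (real \<Rightarrow> real) \<Rightarrow> bool" where
  "left_continuous_mech \<theta>l \<theta>h r q \<longleftrightarrow>
     (\<forall>\<theta>\<in>{\<theta>l<..\<theta>h}. continuous (at_left \<theta>) (\<lambda>t. q t * r t))"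

definition CS :: "(real \<Rightarrow> real) \<Rightarrow> real \<Rightarrow> real \<Rightarrow>
    (real \<Rightarrow> real) \<Rightarrow> (real \<Rightarrow> real) \<Rightarrow> (real \<Rightarrow> real) \<Rightarrow> real" where
  "CS P c \<theta> r q u = r \<theta> * TS P c \<theta> (q \<theta>) - u \<theta>"

definition RS :: "(real \<Rightarrow> real) \<Rightarrow> real \<Rightarrow> real \<Rightarrow> real \<Rightarrow>
    (real \<Rightarrow> real) \<Rightarrow> (real \<Rightarrow> real) \<Rightarrow> (real \<Rightarrow> real) \<Rightarrow> real" where
  "RS P c \<alpha> \<theta> r q u = r \<theta> * TS P c \<theta> (q \<theta>) - (1 - \<alpha>) * u \<theta>"

end

theory Submission
  imports Defs
begin

lemma Pdec:
  assumes "strict_antimono_on {0..qbar} (P::real\<Rightarrow>real)" "x \<in> {0..qbar}" "y \<in> {0..qbar}" "x < y"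
  shows "P y < P x"
  using assms by (auto simp: monotone_on_def)

lemma Pdec_le:
  assumes "strict_antimono_on {0..qbar} (P::real\<Rightarrow>real)" "x \<in> {0..qbar}" "y \<in> {0..qbar}" "x \<le> y"
  shows "P y \<le> P x"
  using assms by (cases "x = y") (auto simp: monotone_on_def less_imp_le)

lemma V_diff:
  assumes "continuous_on {0..qbar} (P::real\<Rightarrow>real)" "0 \<le> a" "a \<le> b" "b \<le> qbar"
  shows "V P b - V P a = integral {a..b} P"
proof -
  have "P integrable_on {0..b}"
    using assms by (intro integrable_continuous_interval) (auto intro: continuous_on_subset)
  from Henstock_Kurzweil_Integration.integral_combine[OF assms(2,3) this] show ?thesis by (simp add: V_def)
qed

lemma int_bounds:
  assumes "continuous_on {0..qbar} (P::real\<Rightarrow>real)" "strict_antimono_on {0..qbar} P"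
    "0 \<le> a" "a \<le> b" "b \<le> qbar"
  shows "(b-a) * P b \<le> integral {a..b} P" "integral {a..b} P \<le> (b-a) * P a"
proof -
  have int: "P integrable_on {a..b}"
    using assms by (intro integrable_continuous_interval) (auto intro: continuous_on_subset)
  have "integral {a..b} (\<lambda>_. P b) \<le> integral {a..b} P"
    by (rule integral_le[OF integrable_const_ivl int]) (use assms in \<open>auto intro!: Pdec_le[OF assms(2)]\<close>)
  then show "(b-a) * P b \<le> integral {a..b} P" using assms by simp
  have "integral {a..b} P \<le> integral {a..b} (\<lambda>_. P a)"
    by (rule integral_le[OF int integrable_const_ivl]) (use assms in \<open>auto intro!: Pdec_le[OF assms(2)]\<close>)
  then show "integral {a..b} P \<le> (b-a) * P a" using assms by simp
qed


locale mkt =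
  fixes P :: "real \<Rightarrow> real" and qbar :: real
  assumes cont: "continuous_on {0..qbar} P" and sam: "strict_antimono_on {0..qbar} P"
    and qbar_pos: "0 < qbar" and Pq: "P qbar = 0"
begin

lemma lt: "x \<in> {0..qbar} \<Longrightarrow> y \<in> {0..qbar} \<Longrightarrow> x < y \<Longrightarrow> P y < P x"
  using Pdec[OF sam] by blast
lemma le: "x \<in> {0..qbar} \<Longrightarrow> y \<in> {0..qbar} \<Longrightarrow> x \<le> y \<Longrightarrow> P y \<le> P x"
  using Pdec_le[OF sam] by blast

lemma Vd: "0 \<le> a \<Longrightarrow> a \<le> b \<Longrightarrow> b \<le> qbar \<Longrightarrow> (b-a) * P b \<le> V P b - V P a"
  using V_diff[OF cont] int_bounds[OF cont sam] by simp
lemma Vu: "0 \<le> a \<Longrightarrow> a \<le> b \<Longrightarrow> b \<le> qbar \<Longrightarrow> V P b - V P a \<le> (b-a) * P a"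
  using V_diff[OF cont] int_bounds[OF cont sam] by simp

lemma Phi_mono: assumes "0 \<le> a" "a \<le> b" "b \<le> qbar"
  shows "V P a - a * P a \<le> V P b - b * P b"
proof -
  have "(b-a) * P b \<le> V P b - V P a" using Vd assms by blast
  moreover have "P b \<le> P a" using le assms by auto
  moreover have "a * P b \<le> a * P a" using calculation(2) assms mult_left_mono by blast
  ultimately show ?thesis by (simp add: algebra_simps)
qed

lemma Phi_strict_pos: assumes "0 < a" "a < b" "b \<le> qbar"
  shows "V P a - a * P a < V P b - b * P b"
proof -
  have "(b-a) * P b \<le> V P b - V P a" using Vd assms by auto
  moreover have "P b < P a" using lt assms by auto
  moreover have "a * P b < a * P a" using calculation(2) assms by simp
  ultimately show ?thesis by (simp add: algebra_simps)
qed

lemma Phi_strict: assumes "0 \<le> a" "a < b" "b \<le> qbar"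
  shows "V P a - a * P a < V P b - b * P b"
proof (cases "a = 0")
  case True
  have "V P a - a * P a \<le> V P (b/2) - (b/2) * P (b/2)" using Phi_mono[of a "b/2"] assms True by auto
  also have "\<dots> < V P b - b * P b" using Phi_strict_pos[of "b/2" b] assms True by auto
  finally show ?thesis .
next
  case False then show ?thesis using Phi_strict_pos assms by auto
qed

lemma W_strict: assumes "0 \<le> a" "a < b" "b \<le> qbar" "\<theta> \<le> P b"
  shows "V P a - \<theta> * a < V P b - \<theta> * b"
proof -
  define m where "m = (a+b)/2"
  have m: "a < m" "m < b" using assms by (auto simp: m_def)
  have 1: "(b-m) * P b \<le> V P b - V P m" using Vd assms m by auto
  have 2: "(m-a) * P m \<le> V P m - V P a" using Vd assms m by auto
  have "P b < P m" using lt assms m by auto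
  then have "(m-a) * \<theta> < (m-a) * P m" using assms m by simp
  moreover have "(b-m) * \<theta> \<le> (b-m) * P b" using assms m by simp
  ultimately show ?thesis using 1 2 by (simp add: algebra_simps)
qed

lemma V_cont: "continuous_on {0..qbar} (V P)"
  unfolding V_def
  by (rule indefinite_integral_continuous_1, rule integrable_continuous_interval, rule cont)

lemma qe_ex1: assumes "0 \<le> t" "t \<le> P 0"
  shows "\<exists>!q. 0 \<le> q \<and> q \<le> qbar \<and> P q = t"
proof -
  obtain x where "0 \<le> x" "x \<le> qbar" "P x = t"
    using IVT2'[of P qbar t 0] assms Pq qbar_pos cont by auto
  moreover have "y = x" if "0 \<le> y" "y \<le> qbar" "P y = t" for y
    using lt[of x y] lt[of y x] that calculation by (cases "x < y"; cases "y < x"; auto)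
  ultimately show ?thesis by blast
qed

lemma qe: assumes "0 \<le> t" "t \<le> P 0"
  shows "0 \<le> qe P qbar t" "qe P qbar t \<le> qbar" "P (qe P qbar t) = t"
  using theI'[OF qe_ex1[OF assms]] unfolding qe_def by auto

lemma qe_ge: assumes "0 \<le> t" "t \<le> P 0" "0 \<le> x" "x \<le> qbar" "t \<le> P x"
  shows "x \<le> qe P qbar t"
proof (rule ccontr)
  assume "\<not> ?thesis"
  then have "P x < P (qe P qbar t)" using lt[of "qe P qbar t" x] qe[OF assms(1,2)] assms by auto
  then show False using qe(3)[OF assms(1,2)] assms by simp
qed

lemma qe_anti: assumes "0 \<le> s" "s \<le> t" "t \<le> P 0"
  shows "qe P qbar t \<le> qe P qbar s"
  using qe_ge[of s "qe P qbar t"] qe[of t] qe[of s] assms by auto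


lemma qhat: assumes "0 < th" "th < P 0" "0 < c" "TS P c th (qe P qbar th) > 0"
  shows "0 < qhat P qbar c" "qhat P qbar c \<le> qbar"
    "V P (qhat P qbar c) - qhat P qbar c * P (qhat P qbar c) = c"
    "qhat P qbar c < qe P qbar th"
proof -
  define e where "e = qe P qbar th"
  have e: "0 \<le> e" "e \<le> qbar" "P e = th" using qe[of th] assms by (auto simp: e_def)
  have epos: "0 < e"
  proof (rule ccontr)
    assume "\<not> 0 < e" then have "TS P c th e = 0" by (simp add: TS_def)
    with assms(4) show False by (simp add: e_def)
  qed
  have "TS P c th e = V P e - c - th * e" using epos by (simp add: TS_def)
  then have Phe: "c < V P e - e * P e" using assms(4) e(3) by (simp add: e_def algebra_simps)
  have V0: "V P 0 = 0" by (simp add: V_def)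
  have "continuous_on {0..e} (\<lambda>x. V P x - x * P x)"
  proof -
    have "{0..e} \<subseteq> {0..qbar}" using e by auto
    then have "continuous_on {0..e} (V P)" "continuous_on {0..e} P"
      using continuous_on_subset[OF V_cont] continuous_on_subset[OF cont] by blast+
    then show ?thesis by (intro continuous_on_diff continuous_on_mult continuous_on_id)
  qed
  moreover have "(\<lambda>x. V P x - x * P x) 0 \<le> c" using V0 assms by simp
  moreover have "c \<le> (\<lambda>x. V P x - x * P x) e" using Phe by simp
  ultimately obtain x where x: "0 \<le> x" "x \<le> e" "V P x - x * P x = c"
    using IVT'[of "\<lambda>x. V P x - x * P x" 0 c e] e(1) by blast
  have xpos: "0 < x" using x V0 assms by (cases "x = 0") auto
  have xe: "x < e" using x Phe by (cases "x = e") auto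
  have uniq: "y = x" if "0 < y" "y \<le> qbar" "V P y - y * P y = c" for y
  proof -
    have "\<not> x < y"
    proof
      assume "x < y" then have "V P x - x*P x < V P y - y * P y" using Phi_strict x(1) that(2) by blast
      then show False using x(3) that(3) by simp
    qed
    moreover have "\<not> y < x"
    proof
      assume "y < x" then have "V P y - y*P y < V P x - x * P x" using Phi_strict that(1) x(2) e(2) by force
      then show False using x(3) that(3) by simp
    qed
    ultimately show ?thesis by simp
  qed
  have ex1: "\<exists>!q. 0 < q \<and> q \<le> qbar \<and> V P q - q * P q = c"
  proof (rule ex1I[of _ x])
    show "0 < x \<and> x \<le> qbar \<and> V P x - x * P x = c" using xpos x e by simp
  qed (use uniq in blast)
  have "qhat P qbar c = x" unfolding qhat_def
    by (rule the1_equality[OF ex1]) (use xpos x e in auto)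
  then show "0 < qhat P qbar c" "qhat P qbar c \<le> qbar"
    "V P (qhat P qbar c) - qhat P qbar c * P (qhat P qbar c) = c"
    "qhat P qbar c < qe P qbar th" using xpos x xe e by (auto simp: e_def)
qed

lemma TS_lt: assumes "0 < x" "x < y" "y \<le> qbar" "0 \<le> \<theta>" "\<theta> \<le> P 0" "y \<le> qe P qbar \<theta>"
  shows "TS P c \<theta> x < TS P c \<theta> y"
proof -
  have "P (qe P qbar \<theta>) \<le> P y" using le[of y "qe P qbar \<theta>"] qe[OF assms(4,5)] assms by auto
  then have "\<theta> \<le> P y" using qe(3)[OF assms(4,5)] by simp
  then have "V P x - \<theta> * x < V P y - \<theta> * y" using W_strict assms by auto
  then show ?thesis using assms by (simp add: TS_def)
qed

lemma TSQ_pos: assumes "0 < Q" "V P Q - Q * P Q = c" "0 \<le> \<theta>" "\<theta> \<le> P 0" "Q < qe P qbar \<theta>"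
  shows "0 < TS P c \<theta> Q"
proof -
  have "P (qe P qbar \<theta>) < P Q" using lt[of Q "qe P qbar \<theta>"] qe[OF assms(3,4)] assms by auto
  then have "\<theta> < P Q" using qe(3)[OF assms(3,4)] by simp
  have "TS P c \<theta> Q = Q * (P Q - \<theta>)" using assms by (simp add: TS_def algebra_simps)
  then show ?thesis using \<open>\<theta> < P Q\<close> assms by simp
qed

definition hh where "hh c Q \<theta> x = (if Q \<le> x then TS P c \<theta> x else x / Q * TS P c \<theta> Q)"

lemma hh_strict: assumes "0 < Q" "V P Q - Q * P Q = c" "0 \<le> \<theta>" "\<theta> \<le> P 0"
   "Q < qe P qbar \<theta>" "0 \<le> x" "x < y" "y \<le> qe P qbar \<theta>"
  shows "hh c Q \<theta> x < hh c Q \<theta> y"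
proof -
  have T: "0 < TS P c \<theta> Q" using TSQ_pos assms by blast
  have yq: "y \<le> qbar" using qe[OF assms(3,4)] assms by auto
  consider "Q \<le> x" | "x < Q" "y < Q" | "x < Q" "Q \<le> y" by linarith
  then show ?thesis
  proof cases
    case 1 then show ?thesis using TS_lt[of x y \<theta> c] assms yq by (simp add: hh_def)
  next
    case 2
    have "x / Q * TS P c \<theta> Q < y / Q * TS P c \<theta> Q"
      using T assms by (intro mult_strict_right_mono divide_strict_right_mono) auto
    then show ?thesis using 2 by (simp add: hh_def)
  next
    case 3
    have "x / Q * TS P c \<theta> Q < 1 * TS P c \<theta> Q"
      using T assms 3 by (intro mult_strict_right_mono) auto
    also have "\<dots> \<le> TS P c \<theta> y"
      using TS_lt[of Q y \<theta> c] assms yq 3 by (cases "Q = y") auto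
    finally show ?thesis using 3 by (simp add: hh_def)
  qed
qed

lemma hh_mono: assumes "0 < Q" "V P Q - Q * P Q = c" "0 \<le> \<theta>" "\<theta> \<le> P 0"
   "Q < qe P qbar \<theta>" "0 \<le> x" "x \<le> y" "y \<le> qe P qbar \<theta>"
  shows "hh c Q \<theta> x \<le> hh c Q \<theta> y"
  using hh_strict[OF assms(1-6), of y] assms by (cases "x = y") auto



end


lemma interval_pred:
  assumes "\<And>a b x. a \<in> S \<Longrightarrow> b \<in> S \<Longrightarrow> a \<le> x \<Longrightarrow> x \<le> b \<Longrightarrow> x \<in> S"
  shows "is_interval (S::real set)"
  using assms unfolding is_interval_1 by blast

definition lft :: "(real \<Rightarrow> real) \<Rightarrow> real \<Rightarrow> real \<Rightarrow> real" where
  "lft g a t = (if a < t then Inf (g ` {a..<t}) else g t)"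

locale anti =
  fixes g :: "real \<Rightarrow> real" and a b :: real
  assumes mono: "\<And>x y. x \<in> {a..b} \<Longrightarrow> y \<in> {a..b} \<Longrightarrow> x \<le> y \<Longrightarrow> g y \<le> g x"
    and nonneg: "\<And>x. x \<in> {a..b} \<Longrightarrow> 0 \<le> g x"
begin

lemma bdd: "t \<le> b \<Longrightarrow> bdd_below (g ` {a..<t})"
  using nonneg by (intro bdd_belowI[of _ 0]) auto

lemma ne: "a < t \<Longrightarrow> g ` {a..<t} \<noteq> {}" by auto

lemma lft_a: "lft g a a = g a" by (simp add: lft_def)

lemma lft_le: assumes "t \<in> {a..b}" "s \<in> {a..b}" "s < t"
  shows "lft g a t \<le> g s"
  using assms by (auto simp: lft_def intro!: cInf_lower bdd)

lemma lft_ge: assumes "t \<in> {a..b}" shows "g t \<le> lft g a t"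
proof (cases "a < t")
  case True
  then show ?thesis unfolding lft_def using assms
    by (auto intro!: cInf_greatest mono)
qed (simp add: lft_def)

lemma lft_nonneg: assumes "t \<in> {a..b}" shows "0 \<le> lft g a t"
  using lft_ge[OF assms] nonneg[OF assms] by simp

lemma lft_le_a: assumes "t \<in> {a..b}" shows "lft g a t \<le> g a"
proof (cases "a < t")
  case True then show ?thesis using lft_le[OF assms, of a] assms by auto
qed (use assms in \<open>simp add: lft_def\<close>)

lemma lft_mono: assumes "x \<in> {a..b}" "y \<in> {a..b}" "x \<le> y"
  shows "lft g a y \<le> lft g a x"
proof (cases "a < x")
  case True
  then have "a < y" using assms by simp
  then show ?thesis using True assms unfolding lft_def
    by (auto intro!: cInf_superset_mono bdd)
next
  case False
  then have "x = a" using assms by simp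
  then show ?thesis using lft_le_a assms by (simp add: lft_def)
qed

lemma lft_approx: assumes "a < t" "t \<le> b" "lft g a t < y"
  shows "\<exists>s. a \<le> s \<and> s < t \<and> g s < y"
  using assms cInf_less_iff[OF ne[of t] bdd[of t], of y] by (auto simp: lft_def)

lemma lft_tendsto: assumes "a < t" "t \<le> b"
  shows "(lft g a \<longlongrightarrow> lft g a t) (at_left t)"
proof (rule order_tendstoI)
  fix y assume "y < lft g a t"
  have "eventually (\<lambda>s. s \<in> {a<..<t}) (at_left t)"
    using assms eventually_at_left_real by blast
  then show "eventually (\<lambda>s. y < lft g a s) (at_left t)"
  proof (rule eventually_mono)
    fix s assume "s \<in> {a<..<t}"
    then have "lft g a t \<le> lft g a s" using lft_mono[of s t] assms by auto
    then show "y < lft g a s" using \<open>y < lft g a t\<close> by simp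
  qed
next
  fix y assume "lft g a t < y"
  then obtain s where s: "a \<le> s" "s < t" "g s < y" using lft_approx assms by blast
  have "eventually (\<lambda>x. x \<in> {s<..<t}) (at_left t)"
    using s eventually_at_left_real by blast
  then show "eventually (\<lambda>x. lft g a x < y) (at_left t)"
  proof (rule eventually_mono)
    fix x assume "x \<in> {s<..<t}"
    then have "lft g a x \<le> g s" using lft_le[of x s] s assms by auto
    then show "lft g a x < y" using s by simp
  qed
qed

lemma g_tendsto: assumes "a < t" "t \<le> b" "lft g a t = g t"
  shows "(g \<longlongrightarrow> g t) (at_left t)"
proof (rule order_tendstoI)
  fix y assume "y < g t"
  have "eventually (\<lambda>s. s \<in> {a<..<t}) (at_left t)"
    using assms eventually_at_left_real by blast
  then show "eventually (\<lambda>s. y < g s) (at_left t)"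
  proof (rule eventually_mono)
    fix s assume "s \<in> {a<..<t}"
    then have "g t \<le> g s" using mono[of s t] assms by auto
    then show "y < g s" using \<open>y < g t\<close> by simp
  qed
next
  fix y assume "g t < y"
  then have "lft g a t < y" using assms(3) by simp
  then obtain s where s: "a \<le> s" "s < t" "g s < y" using lft_approx assms(1,2) by blast
  have "eventually (\<lambda>x. x \<in> {s<..<t}) (at_left t)"
    using s eventually_at_left_real by blast
  then show "eventually (\<lambda>x. g x < y) (at_left t)"
  proof (rule eventually_mono)
    fix x assume "x \<in> {s<..<t}"
    then have "g x \<le> g s" using mono[of s x] s assms by auto
    then show "g x < y" using s by simp
  qed
qed

lemma countable_jumps: "countable {t\<in>{a..b}. lft g a t \<noteq> g t}"
proof -
  define N where "N = {t\<in>{a..b}. lft g a t \<noteq> g t}"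
  have lt: "g t < lft g a t" if "t \<in> N" for t
    using that lft_ge[of t] by (auto simp: N_def)
  define f where "f t = (SOME x. x \<in> \<rat> \<and> g t < x \<and> x < lft g a t)" for t
  have f: "f t \<in> \<rat> \<and> g t < f t \<and> f t < lft g a t" if "t \<in> N" for t
    unfolding f_def by (rule someI_ex) (use Rats_dense_in_real[OF lt[OF that]] in blast)
  have "inj_on f N"
  proof (rule inj_onI)
    fix x y assume xy: "x \<in> N" "y \<in> N" "f x = f y"
    show "x = y"
    proof (rule ccontr)
      assume "x \<noteq> y"
      then consider "x < y" | "y < x" by linarith
      then show False
      proof cases
        case 1
        then have "lft g a y \<le> g x" using lft_le[of y x] xy by (auto simp: N_def)
        then show False using f[OF xy(1)] f[OF xy(2)] xy(3) by simp
      next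
        case 2
        then have "lft g a x \<le> g y" using lft_le[of x y] xy by (auto simp: N_def)
        then show False using f[OF xy(1)] f[OF xy(2)] xy(3) by simp
      qed
    qed
  qed
  moreover have "countable (f ` N)"
    using f countable_rat by (auto intro: countable_subset[of _ \<rat>])
  ultimately show ?thesis using countable_image_inj_on unfolding N_def by blast
qed

end

theorem lemma5:
  fixes \<theta>l \<theta>h c qbar \<alpha> :: real and P r q u :: "real \<Rightarrow> real"
  assumes "0 < \<theta>l" and "\<theta>l < \<theta>h" and "0 < c" and "0 < qbar"
    and "continuous_on {0..qbar} P" and "strict_antimono_on {0..qbar} P" and "P qbar = 0"
    and "\<theta>h < P 0"
    and A2: "TS P c \<theta>h (qe P qbar \<theta>h) > 0"
    and "0 \<le> \<alpha>" and "\<alpha> < 1"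
    and FR: "floor_randomized P qbar c \<theta>l \<theta>h r q u"
    and DDM: "DD P qbar \<theta>l \<theta>h q"
  shows "\<exists>r' q'. floor_randomized P qbar c \<theta>l \<theta>h r' q' u \<and> DD P qbar \<theta>l \<theta>h q'
      \<and> left_continuous_mech \<theta>l \<theta>h r' q'
      \<and> (\<forall>\<theta>\<in>{\<theta>l..\<theta>h}. q' \<theta> * r' \<theta> \<ge> q \<theta> * r \<theta>
            \<and> CS P c \<theta> r' q' u \<ge> CS P c \<theta> r q u
            \<and> RS P c \<alpha> \<theta> r' q' u \<ge> RS P c \<alpha> \<theta> r q u)
      \<and> (AE \<theta> in lborel. \<theta> \<in> {\<theta>l..\<theta>h} \<longrightarrow>
            q' \<theta> * r' \<theta> = q \<theta> * r \<theta>
            \<and> CS P c \<theta> r' q' u = CS P c \<theta> r q u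
            \<and> RS P c \<alpha> \<theta> r' q' u = RS P c \<alpha> \<theta> r q u)
      \<and> (\<forall>\<theta>\<in>{\<theta>l<..\<theta>h}. \<not> continuous (at_left \<theta>) (\<lambda>t. q t * r t) \<longrightarrow>
            q' \<theta> * r' \<theta> > q \<theta> * r \<theta>
            \<and> CS P c \<theta> r' q' u > CS P c \<theta> r q u
            \<and> RS P c \<alpha> \<theta> r' q' u > RS P c \<alpha> \<theta> r q u)"
proof -
  interpret m: mkt P qbar using assms by unfold_locales auto
  define D where "D = {\<theta>l..\<theta>h}"
  define Q where "Q = qhat P qbar c"
  have Q: "0 < Q" "Q \<le> qbar" "V P Q - Q * P Q = c" "Q < qe P qbar \<theta>h"
    using m.qhat[of \<theta>h c] assms by (auto simp: Q_def)
  have mech: "mechanism \<theta>l \<theta>h qbar r q u" and IC: "IC \<theta>l \<theta>h r q u" and IR: "IR \<theta>l \<theta>h u"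
    and uh: "u \<theta>h = 0"
    using FR unfolding floor_randomized_def by blast+
  obtain T1 T01 T0 where
    parts: "T1 \<union> T01 \<union> T0 = {\<theta>l..\<theta>h}" and
    P1: "\<forall>\<theta>\<in>T1. q \<theta> \<ge> Q \<and> r \<theta> = 1" and
    P01: "\<forall>\<theta>\<in>T01. q \<theta> = Q \<and> 0 < r \<theta> \<and> r \<theta> < 1" and
    P0: "\<forall>\<theta>\<in>T0. q \<theta> = 0 \<and> r \<theta> = 0"
    using FR unfolding floor_randomized_def Q_def by blast
  have thD: "0 \<le> \<theta> \<and> \<theta> \<le> P 0" if "\<theta> \<in> D" for \<theta>
    using that assms by (auto simp: D_def)
  have qeQ: "Q < qe P qbar \<theta>" if "\<theta> \<in> D" for \<theta>
    using m.qe_anti[of \<theta> \<theta>h] that Q thD assms by (auto simp: D_def)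
  have DDq: "q \<theta> \<le> qe P qbar \<theta>" if "\<theta> \<in> D" for \<theta>
    using DDM that by (auto simp: DD_def D_def)
  define g where "g t = q t * r t" for t
  have mD: "0 \<le> r \<theta> \<and> r \<theta> \<le> 1 \<and> 0 \<le> q \<theta> \<and> q \<theta> \<le> qbar \<and> (q \<theta> = 0 \<longleftrightarrow> r \<theta> = 0)"
    if "\<theta> \<in> D" for \<theta>
    using mech that by (auto simp: mechanism_def D_def)
  have gb: "0 \<le> g \<theta> \<and> g \<theta> \<le> q \<theta>" if "\<theta> \<in> D" for \<theta>
    using mD[OF that] by (auto simp: g_def intro: mult_left_le)
  have ICD: "u x \<ge> u y + (y - x) * g y" if "x \<in> D" "y \<in> D" for x y
    using IC that by (auto simp: IC_def D_def g_def mult.assoc)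
  have gmono: "g y \<le> g x" if "x \<in> D" "y \<in> D" "x \<le> y" for x y
  proof (cases "x = y")
    case False
    have "0 \<ge> (y - x) * (g y - g x)" using ICD[OF that(1,2)] ICD[OF that(2,1)]
      by (simp add: algebra_simps)
    moreover have "y - x > 0" using that False by simp
    ultimately show ?thesis by (simp add: mult_le_0_iff)
  qed simp
  have umono: "u y \<le> u x" if "x \<in> D" "y \<in> D" "x \<le> y" for x y
    using ICD[OF that(1,2)] gb[OF that(2)] that(3) by (smt (verit) mult_nonneg_nonneg)
  interpret an: anti g \<theta>l \<theta>h
    using gmono gb by unfold_locales (auto simp: D_def)
  define G where "G = lft g \<theta>l"
  have GD: "g \<theta> \<le> G \<theta>" "0 \<le> G \<theta>" "G \<theta> \<le> qbar" if "\<theta> \<in> D" for \<theta>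
  proof -
    show "g \<theta> \<le> G \<theta>" using an.lft_ge that by (simp add: G_def D_def)
    show "0 \<le> G \<theta>" using an.lft_nonneg that by (simp add: G_def D_def)
    have "\<theta>l \<in> D" using assms by (simp add: D_def)
    then show "G \<theta> \<le> qbar" using an.lft_le_a[of \<theta>] that gb[of \<theta>l] mD[of \<theta>l]
      by (simp add: G_def D_def)
  qed
  have Gl: "G \<theta>l = g \<theta>l" by (simp add: G_def an.lft_a)
  have Gmono: "G y \<le> G x" if "x \<in> D" "y \<in> D" "x \<le> y" for x y
    using an.lft_mono that by (auto simp: G_def D_def)
  have Gle: "G \<theta> \<le> g s" if "\<theta> \<in> D" "s \<in> D" "s < \<theta>" for \<theta> s
    using an.lft_le that by (auto simp: G_def D_def)
  have Gqe: "G \<theta> \<le> qe P qbar \<theta>" if "\<theta> \<in> D" for \<theta>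
  proof (cases "\<theta> = \<theta>l")
    case True then show ?thesis using Gl gb[OF that] DDq[OF that] by simp
  next
    case False
    then have lt: "\<theta>l < \<theta>" using that by (simp add: D_def)
    have "s \<le> P (G \<theta>)" if "\<theta>l < s" "s < \<theta>" for s
    proof -
      have sD: "s \<in> D" using that \<open>\<theta> \<in> D\<close> by (auto simp: D_def)
      have "G \<theta> \<le> qe P qbar s" using Gle[OF \<open>\<theta> \<in> D\<close> sD that(2)] gb[OF sD] DDq[OF sD] by simp
      then have "P (qe P qbar s) \<le> P (G \<theta>)"
        using m.le[of "G \<theta>" "qe P qbar s"] m.qe[of s] thD[OF sD] GD[OF \<open>\<theta> \<in> D\<close>] by auto
      then show ?thesis using m.qe(3)[of s] thD[OF sD] by simp
    qed
    then have "\<theta> \<le> P (G \<theta>)" by (intro dense_le_bounded[OF lt]) auto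
    then show ?thesis using m.qe_ge[of \<theta> "G \<theta>"] thD[OF that] GD[OF that] by auto
  qed
  define q' where "q' t = (if Q \<le> G t then G t else if 0 < G t then Q else 0)" for t
  define r' where "r' t = (if Q \<le> G t then 1 else if 0 < G t then G t / Q else 0)" for t
  have prod: "q' t * r' t = G t" if "0 \<le> G t" for t
    using that Q(1) by (auto simp: q'_def r'_def)
  have hrep: "r \<theta> * TS P c \<theta> (q \<theta>) = m.hh c Q \<theta> (g \<theta>)" if "\<theta> \<in> D" for \<theta>
  proof -
    have "\<theta> \<in> T1 \<union> T01 \<union> T0" using parts that by (simp add: D_def)
    then consider "\<theta> \<in> T1" | "\<theta> \<in> T01" | "\<theta> \<in> T0" by blast
    then show ?thesis
    proof cases
      case 1 then have "q \<theta> \<ge> Q" "r \<theta> = 1" using P1 by auto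
      then show ?thesis by (simp add: g_def m.hh_def)
    next
      case 2
      then have "q \<theta> = Q" "r \<theta> < 1" using P01 by auto
      then have "\<not> Q \<le> g \<theta>" using Q(1) by (simp add: g_def)
      then show ?thesis using \<open>q \<theta> = Q\<close> Q(1) by (simp add: g_def m.hh_def)
    next
      case 3 then have "q \<theta> = 0" "r \<theta> = 0" using P0 by auto
      then show ?thesis using Q(1) by (simp add: g_def m.hh_def)
    qed
  qed
  have hrep': "r' \<theta> * TS P c \<theta> (q' \<theta>) = m.hh c Q \<theta> (G \<theta>)" if "\<theta> \<in> D" for \<theta>
  proof -
    have g0: "0 \<le> G \<theta>" using GD(2)[OF that] .
    consider "Q \<le> G \<theta>" | "0 < G \<theta>" "G \<theta> < Q" | "G \<theta> = 0" using g0 by linarith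
    then show ?thesis
    proof cases
      case 1 then show ?thesis by (simp add: q'_def r'_def m.hh_def)
    next
      case 2 then show ?thesis by (simp add: q'_def r'_def m.hh_def)
    next
      case 3 then show ?thesis using Q(1) by (simp add: q'_def r'_def m.hh_def)
    qed
  qed
  have cmp: "m.hh c Q \<theta> (g \<theta>) \<le> m.hh c Q \<theta> (G \<theta>)" if "\<theta> \<in> D" for \<theta>
    using m.hh_mono[OF Q(1) Q(3), of \<theta> "g \<theta>" "G \<theta>"] thD[OF that] qeQ[OF that] gb[OF that]
      GD[OF that] Gqe[OF that] by auto
  have cmps: "m.hh c Q \<theta> (g \<theta>) < m.hh c Q \<theta> (G \<theta>)" if "\<theta> \<in> D" "g \<theta> < G \<theta>" for \<theta>
    using m.hh_strict[OF Q(1) Q(3), of \<theta> "g \<theta>" "G \<theta>"] thD[OF that(1)] qeQ[OF that(1)] gb[OF that(1)]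
      that(2) Gqe[OF that(1)] by auto
  have icG: "u \<theta> \<ge> u \<theta>' + (\<theta>' - \<theta>) * G \<theta>'" if xD: "\<theta> \<in> D" and yD: "\<theta>' \<in> D" for \<theta> \<theta>'
  proof (cases "\<theta>' \<le> \<theta>")
    case True
    have "(\<theta>' - \<theta>) * G \<theta>' \<le> (\<theta>' - \<theta>) * g \<theta>'"
      using True GD(1)[OF yD] by (intro mult_left_mono_neg) auto
    then show ?thesis using ICD[OF xD yD] by simp
  next
    case False
    then have lt: "\<theta> < \<theta>'" by simp
    have key: "(t - \<theta>) * G \<theta>' \<le> u \<theta> - u \<theta>'" if "\<theta> \<le> t" "t < \<theta>'" for t
    proof -
      have tD: "t \<in> D" using that xD yD by (auto simp: D_def)
      have "(t - \<theta>) * G \<theta>' \<le> (t - \<theta>) * g t"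
        using Gle[OF yD tD that(2)] that by (intro mult_left_mono) auto
      moreover have "u t + (t - \<theta>) * g t \<le> u \<theta>" using ICD[OF xD tD] by simp
      moreover have "u \<theta>' \<le> u t" using umono[OF tD yD] that by simp
      ultimately show ?thesis by simp
    qed
    have "(\<theta>' - \<theta>) * G \<theta>' \<le> u \<theta> - u \<theta>'"
    proof (cases "G \<theta>' = 0")
      case True then show ?thesis using key[of \<theta>] lt by simp
    next
      case False
      then have Gp: "0 < G \<theta>'" using GD(2)[OF yD] by simp
      have "0 < (\<theta>' - \<theta>) * G \<theta>'" using Gp lt by simp
      then show ?thesis
      proof (rule dense_le_bounded)
        fix w assume w: "0 < w" "w < (\<theta>' - \<theta>) * G \<theta>'"
        define t where "t = \<theta> + w / G \<theta>'"
        have "w / G \<theta>' < \<theta>' - \<theta>" using w Gp by (simp add: divide_less_eq)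
        then have "\<theta> \<le> t" "t < \<theta>'" using w Gp by (auto simp: t_def)
        moreover have "(t - \<theta>) * G \<theta>' = w" using Gp by (simp add: t_def)
        ultimately show "w \<le> u \<theta> - u \<theta>'" using key by metis
      qed
    qed
    then show ?thesis by simp
  qed
  define T1' where "T1' = {\<theta>\<in>D. Q \<le> G \<theta>}"
  define T01' where "T01' = {\<theta>\<in>D. 0 < G \<theta> \<and> G \<theta> < Q}"
  define T0' where "T0' = {\<theta>\<in>D. G \<theta> \<le> 0}"
  have intD: "x \<in> D" if "a \<in> D" "b \<in> D" "a \<le> x" "x \<le> b" for a b x
    using that by (auto simp: D_def)
  have FR': "floor_randomized P qbar c \<theta>l \<theta>h r' q' u"
    unfolding floor_randomized_def
  proof (intro conjI)
    show "mechanism \<theta>l \<theta>h qbar r' q' u"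
      unfolding mechanism_def
    proof
      fix \<theta> assume "\<theta> \<in> {\<theta>l..\<theta>h}" then have \<theta>D: "\<theta> \<in> D" by (simp add: D_def)
      show "0 \<le> r' \<theta> \<and> r' \<theta> \<le> 1 \<and> 0 \<le> q' \<theta> \<and> q' \<theta> \<le> qbar \<and> (q' \<theta> = 0) = (r' \<theta> = 0)"
        using GD[OF \<theta>D] Q(1,2) by (auto simp: q'_def r'_def)
    qed
    show "IC \<theta>l \<theta>h r' q' u"
      unfolding IC_def
    proof (intro ballI)
      fix \<theta> \<theta>' assume "\<theta> \<in> {\<theta>l..\<theta>h}" "\<theta>' \<in> {\<theta>l..\<theta>h}"
      then have xD: "\<theta> \<in> D" and yD: "\<theta>' \<in> D" by (auto simp: D_def)
      have "(\<theta>' - \<theta>) * q' \<theta>' * r' \<theta>' = (\<theta>' - \<theta>) * G \<theta>'"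
        using prod[OF GD(2)[OF yD]] by (simp only: mult.assoc)
      then show "u \<theta>' + (\<theta>' - \<theta>) * q' \<theta>' * r' \<theta>' \<le> u \<theta>" using icG[OF xD yD] by linarith
    qed
    show "IR \<theta>l \<theta>h u" by (rule IR)
    show "u \<theta>h = 0" by (rule uh)
    show "\<exists>T1 T01 T0. is_interval T1 \<and> is_interval T01 \<and> is_interval T0 \<and>
        T1 \<union> T01 \<union> T0 = {\<theta>l..\<theta>h} \<and>
        T1 \<inter> T01 = {} \<and> T1 \<inter> T0 = {} \<and> T01 \<inter> T0 = {} \<and>
        (\<forall>x\<in>T0. \<forall>y\<in>T01. y < x) \<and> (\<forall>x\<in>T01. \<forall>y\<in>T1. y < x) \<and>
        (\<forall>\<theta>\<in>T1. q' \<theta> \<ge> qhat P qbar c \<and> r' \<theta> = 1) \<and>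
        (\<forall>\<theta>\<in>T01. q' \<theta> = qhat P qbar c \<and> 0 < r' \<theta> \<and> r' \<theta> < 1) \<and>
        (\<forall>\<theta>\<in>T0. q' \<theta> = 0 \<and> r' \<theta> = 0)"
    proof (rule exI[of _ T1'], rule exI[of _ T01'], rule exI[of _ T0'], intro conjI)
      show "is_interval T1'"
      proof (rule interval_pred)
        fix a b x assume ab: "a \<in> T1'" "b \<in> T1'" "a \<le> x" "x \<le> b"
        then have xD: "x \<in> D" using intD[of a b x] by (auto simp: T1'_def)
        then have "G b \<le> G x" using Gmono[of x b] ab by (auto simp: T1'_def)
        then show "x \<in> T1'" using ab xD by (auto simp: T1'_def)
      qed
      show "is_interval T01'"
      proof (rule interval_pred)
        fix a b x assume ab: "a \<in> T01'" "b \<in> T01'" "a \<le> x" "x \<le> b"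
        then have xD: "x \<in> D" using intD[of a b x] by (auto simp: T01'_def)
        then have "G b \<le> G x" "G x \<le> G a" using Gmono[of x b] Gmono[of a x] ab by (auto simp: T01'_def)
        then show "x \<in> T01'" using ab xD by (auto simp: T01'_def)
      qed
      show "is_interval T0'"
      proof (rule interval_pred)
        fix a b x assume ab: "a \<in> T0'" "b \<in> T0'" "a \<le> x" "x \<le> b"
        then have xD: "x \<in> D" using intD[of a b x] by (auto simp: T0'_def)
        then have "G x \<le> G a" using Gmono[of a x] ab by (auto simp: T0'_def)
        then show "x \<in> T0'" using ab xD by (auto simp: T0'_def)
      qed
      show "T1' \<union> T01' \<union> T0' = {\<theta>l..\<theta>h}" by (auto simp: T1'_def T01'_def T0'_def D_def)
      show "T1' \<inter> T01' = {}" "T1' \<inter> T0' = {}" "T01' \<inter> T0' = {}"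
        using Q(1) by (auto simp: T1'_def T01'_def T0'_def)
      show "\<forall>x\<in>T0'. \<forall>y\<in>T01'. y < x"
      proof (intro ballI)
        fix x y assume xy: "x \<in> T0'" "y \<in> T01'"
        show "y < x"
        proof (rule ccontr)
          assume "\<not> y < x"
          then have "G y \<le> G x" using Gmono[of x y] xy by (auto simp: T0'_def T01'_def)
          then show False using xy by (auto simp: T0'_def T01'_def)
        qed
      qed
      show "\<forall>x\<in>T01'. \<forall>y\<in>T1'. y < x"
      proof (intro ballI)
        fix x y assume xy: "x \<in> T01'" "y \<in> T1'"
        show "y < x"
        proof (rule ccontr)
          assume "\<not> y < x"
          then have "G y \<le> G x" using Gmono[of x y] xy by (auto simp: T1'_def T01'_def)
          then show False using xy by (auto simp: T1'_def T01'_def)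
        qed
      qed
      show "\<forall>\<theta>\<in>T1'. q' \<theta> \<ge> qhat P qbar c \<and> r' \<theta> = 1"
        by (auto simp: T1'_def q'_def r'_def Q_def)
      show "\<forall>\<theta>\<in>T01'. q' \<theta> = qhat P qbar c \<and> 0 < r' \<theta> \<and> r' \<theta> < 1"
        using Q(1) by (auto simp: T01'_def q'_def r'_def Q_def)
      show "\<forall>\<theta>\<in>T0'. q' \<theta> = 0 \<and> r' \<theta> = 0"
        using Q(1) by (auto simp: T0'_def q'_def r'_def)
    qed
  qed
  have lD: "\<theta>l \<in> D" using assms by (simp add: D_def)
  have qel: "q \<theta>l = qe P qbar \<theta>l" using DDM by (simp add: DD_def)
  have lT1: "\<theta>l \<in> T1"
  proof -
    have "\<theta>l \<in> T1 \<union> T01 \<union> T0" using parts lD by (simp add: D_def)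
    moreover have "\<theta>l \<notin> T01" using P01 qel qeQ[OF lD] by auto
    moreover have "\<theta>l \<notin> T0" using P0 qel qeQ[OF lD] Q(1) by auto
    ultimately show ?thesis by blast
  qed
  then have gl: "g \<theta>l = q \<theta>l" "Q \<le> q \<theta>l" using P1 by (auto simp: g_def)
  have DD': "DD P qbar \<theta>l \<theta>h q'"
    unfolding DD_def
  proof (intro conjI ballI)
    fix \<theta> assume "\<theta> \<in> {\<theta>l..\<theta>h}" then have \<theta>D: "\<theta> \<in> D" by (simp add: D_def)
    show "q' \<theta> \<le> qe P qbar \<theta>"
      using Gqe[OF \<theta>D] qeQ[OF \<theta>D] m.qe(1)[of \<theta>] thD[OF \<theta>D] by (auto simp: q'_def)
  next
    show "q' \<theta>l = qe P qbar \<theta>l" using Gl gl qel by (simp add: q'_def)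
  qed
  have LC': "left_continuous_mech \<theta>l \<theta>h r' q'"
    unfolding left_continuous_mech_def
  proof
    fix \<theta> assume th: "\<theta> \<in> {\<theta>l<..\<theta>h}"
    have \<theta>D: "\<theta> \<in> D" using th by (simp add: D_def)
    have "(G \<longlongrightarrow> G \<theta>) (at_left \<theta>)" using an.lft_tendsto[of \<theta>] th by (simp add: G_def)
    moreover have "eventually (\<lambda>t. t \<in> {\<theta>l<..<\<theta>}) (at_left \<theta>)"
      using th eventually_at_left_real by auto
    then have "eventually (\<lambda>t. G t = q' t * r' t) (at_left \<theta>)"
    proof (rule eventually_mono)
      fix t assume "t \<in> {\<theta>l<..<\<theta>}"
      then have "t \<in> D" using th by (auto simp: D_def)
      then show "G t = q' t * r' t" using prod GD(2) by metis
    qed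
    ultimately have "((\<lambda>t. q' t * r' t) \<longlongrightarrow> G \<theta>) (at_left \<theta>)"
      by (rule Lim_transform_eventually)
    then show "continuous (at_left \<theta>) (\<lambda>t. q' t * r' t)"
      using prod[OF GD(2)[OF \<theta>D]] by (simp add: continuous_within)
  qed
  have part1: "\<forall>\<theta>\<in>{\<theta>l..\<theta>h}. q' \<theta> * r' \<theta> \<ge> q \<theta> * r \<theta>
            \<and> CS P c \<theta> r' q' u \<ge> CS P c \<theta> r q u
            \<and> RS P c \<alpha> \<theta> r' q' u \<ge> RS P c \<alpha> \<theta> r q u"
  proof (intro ballI conjI)
    fix \<theta> assume "\<theta> \<in> {\<theta>l..\<theta>h}" then have \<theta>D: "\<theta> \<in> D" by (simp add: D_def)
    show "q \<theta> * r \<theta> \<le> q' \<theta> * r' \<theta>" using prod[OF GD(2)[OF \<theta>D]] GD(1)[OF \<theta>D] by (simp add: g_def)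
    show "CS P c \<theta> r q u \<le> CS P c \<theta> r' q' u" using hrep[OF \<theta>D] hrep'[OF \<theta>D] cmp[OF \<theta>D] by (simp add: CS_def)
    show "RS P c \<alpha> \<theta> r q u \<le> RS P c \<alpha> \<theta> r' q' u" using hrep[OF \<theta>D] hrep'[OF \<theta>D] cmp[OF \<theta>D] by (simp add: RS_def)
  qed
  have eq: "q' \<theta> * r' \<theta> = q \<theta> * r \<theta>
            \<and> CS P c \<theta> r' q' u = CS P c \<theta> r q u
            \<and> RS P c \<alpha> \<theta> r' q' u = RS P c \<alpha> \<theta> r q u" if \<theta>D: "\<theta> \<in> D" and e: "G \<theta> = g \<theta>" for \<theta>
    using prod[OF GD(2)[OF \<theta>D]] hrep[OF \<theta>D] hrep'[OF \<theta>D] e by (simp add: g_def CS_def RS_def)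
  have N: "{t\<in>{\<theta>l..\<theta>h}. lft g \<theta>l t \<noteq> g t} \<in> null_sets lborel"
    using countable_imp_null_set_lborel an.countable_jumps by blast
  have part2: "AE \<theta> in lborel. \<theta> \<in> {\<theta>l..\<theta>h} \<longrightarrow>
            q' \<theta> * r' \<theta> = q \<theta> * r \<theta>
            \<and> CS P c \<theta> r' q' u = CS P c \<theta> r q u
            \<and> RS P c \<alpha> \<theta> r' q' u = RS P c \<alpha> \<theta> r q u"
    by (rule AE_I'[OF N]) (use eq in \<open>auto simp: G_def D_def\<close>)
  have part3: "\<forall>\<theta>\<in>{\<theta>l<..\<theta>h}. \<not> continuous (at_left \<theta>) (\<lambda>t. q t * r t) \<longrightarrow>
            q' \<theta> * r' \<theta> > q \<theta> * r \<theta>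
            \<and> CS P c \<theta> r' q' u > CS P c \<theta> r q u
            \<and> RS P c \<alpha> \<theta> r' q' u > RS P c \<alpha> \<theta> r q u"
  proof (intro ballI impI)
    fix \<theta> assume th: "\<theta> \<in> {\<theta>l<..\<theta>h}" and nc: "\<not> continuous (at_left \<theta>) (\<lambda>t. q t * r t)"
    have \<theta>D: "\<theta> \<in> D" using th by (simp add: D_def)
    have "G \<theta> \<noteq> g \<theta>"
    proof
      assume "G \<theta> = g \<theta>"
      then have "(g \<longlongrightarrow> g \<theta>) (at_left \<theta>)" using an.g_tendsto[of \<theta>] th by (simp add: G_def)
      then have "continuous (at_left \<theta>) g" by (simp add: continuous_within)
      moreover have "g = (\<lambda>t. q t * r t)" by (simp add: g_def fun_eq_iff)
      ultimately show False using nc by simp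
    qed
    then have lt: "g \<theta> < G \<theta>" using GD(1)[OF \<theta>D] by simp
    show "q' \<theta> * r' \<theta> > q \<theta> * r \<theta>
            \<and> CS P c \<theta> r' q' u > CS P c \<theta> r q u
            \<and> RS P c \<alpha> \<theta> r' q' u > RS P c \<alpha> \<theta> r q u"
      using prod[OF GD(2)[OF \<theta>D]] hrep[OF \<theta>D] hrep'[OF \<theta>D] lt cmps[OF \<theta>D lt]
      by (simp add: g_def CS_def RS_def)
  qed
  show ?thesis using FR' DD' LC' part1 part2 part3 by blast
qed

end
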